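(* Let $\mathbf{B}$ be a binomial ring and $n\ge0$. For every linear functor $J\colon\mathfrak{MSet}_n\to\mathfrak{Mod}$ one has $\Phi(\Psi^{-1}(J))=J\circ A_n$ as functors on $\mathfrak{Laby}$ (hence on $\mathfrak{Laby}_n$). That is, $\Phi\circ\Psi^{-1}=(A_n)^\ast$: under the equivalences $\Phi$ (numerical functors of degree $n$ $\simeq$ linear functors on $\mathfrak{Laby}_n$) and $\Psi$ (homogeneous functors of degree $n$ $\simeq$ linear functors on $\mathfrak{MSet}_n$), pre-composition with the Ariadne functor $A_n$ corresponds to the forgetful functor from homogeneous to numerical functors.
   Context: Binomial ring: commutative unital, torsion-free, with $\binom ak\in\mathbf{B}$ for all $a\in\mathbf{B}$, $k\ge0$. $\mathfrak{Mod}$: $\mathbf{B}$-modules; $\mathfrak{XMod}$: finitely generated free $\mathbf{B}$-modules. Multi-sets: a finite set with positive integer multiplicities; $|A|$ is the sum of multiplicities, $\#A$ the support. For $|A|=|B|=n$, a multation $\mu\colon A\to B$ is a multi-set of pairs $(a,b)$ whose multi-set of first coordinates is $A$ and of second coordinates is $B$. $\mathfrak{MSet}_n$: objects formal finite direct sums of multi-sets of cardinality $n$; $\mathfrak{MSet}_n(A,B)$ is the free $\mathbf{B}$-module on multations $A\to B$; for $\nu\colon A\to B$, $\mu\colon B\to C$, $\mu\circ\nu=\sum_K\frac{\prod_{(a,c)}m_{K_{13}}(a,c)!}{\prod_{(a,b,c)}m_K(a,b,c)!}K_{13}$, summed over multi-sets $K$ of triples whose $(1,2)$-projection is $\nu$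 and $(2,3)$-projection is $\mu$ ($m$ = multiplicity, $K_{13}$ the $(1,3)$-projection). Divided-power notation: for distinct pairs, $\prod_j[a_j;b_j]^{[m_j]}$ is the multation containing $(a_j,b_j)$ with multiplicity $m_j$, with $[a;b]^{[i]}[a;b]^{[j]}=\binom{i+j}{i}[a;b]^{[i+j]}$. Mazes and $\mathfrak{Laby}$: a passage $p\colon x\to y$ carries label $\overline p\in\mathbf{B}$; a maze $P\colon X\to Y$ between finite sets is a finite multi-set of passages with every element of $X$ a source and of $Y$ a target. $\mathfrak{Laby}$: objects formal finite direct sums of finite sets; $\mathfrak{Laby}(X,Y)$ generated by mazes modulo $P\cup\{x\xrightarrow0y\}=0$ and $P\cup\{x\xrightarrow{a+b}y\}=P\cup\{x\xrightarrow ay\}+P\cup\{x\xrightarrow by\}+P\cup\{x\xrightarrow ay,x\xrightarrow by\}$; composition $P\circ Q=\sum_{U\sqsubseteq P\boxtimes Q}U$ ($U$ a sub-multi-set of composable pairs using all passage occurrences of $P$ and $Q$, read as the maze with passages $x\xrightarrow{\overline p\overline q}z$). Ariadne functor $A_n\colon\mathfrak{Laby}\to\mathfrak{MSet}_n$: $A_n(X)=\bigoplus_{A}A$ over multi-sets $A$ with support exactly $X$ and $|A|=n$; for a maze $P$ with passage occurrences $p\colon x_p\to y_p$, $A_n(P)=\sum_d\prod_p\overline p^{\,d_p}[x_p;y_p]^{[d_p]}$, summed over assignments $d_p\ge1$ with $\sum_pd_p=n$. $\Phi$: for a module functor $F$ (arbitrary functor $\mathfrak{XMod}\to\mathfrak{Mod}$),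 $\Phi(F)(X)=\operatorname{Im}F(\diamond_{x\in X}\pi_x)$ and $\Phi(F)(P)$ is the restriction of $F(\diamond_{p\in P}\overline p\sigma_{y_px_p})$, where $F(\alpha_1\diamond\cdots\diamond\alpha_k)=\sum_{I}(-1)^{k-|I|}F(\sum_{i\in I}\alpha_i)$, $b\sigma_{yx}\colon\mathbf{B}^X\to\mathbf{B}^Y$ sends $e_x\mapsto be_y$ and other basis vectors to $0$, and $\pi_x=\sigma_{xx}$. $\Psi^{-1}(J)$ is the module functor (the homogeneous functor of degree $n$ associated to $J$) given by $\mathbf{B}^X\mapsto\bigoplus_{\#A\subseteq X,\ |A|=n}J(A)$ and, for $s=\sum_{x\in X,y\in Y}s_{yx}\sigma_{yx}\colon\mathbf{B}^X\to\mathbf{B}^Y$, $s\mapsto\sum_{\#A\subseteq X,\#B\subseteq Y,|A|=|B|=n}\ \sum_{\mu\colon A\to B}s^\mu J(\mu)$, where $s^\mu=\prod_{(x,y)}s_{yx}^{m_\mu(x,y)}$. *)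

theory Defs
  imports Complex_Main "HOL-Library.Multiset"
begin

text \<open>A binomial ring: commutative unital, torsion-free, and closed under
  a choose k = a(a-1)...(a-k+1)/k!, i.e. k! divides a(a-1)...(a-k+1).\<close>
definition binomial_ring :: "'b::comm_ring_1 itself \<Rightarrow> bool" where
  "binomial_ring _ \<longleftrightarrow>
     (\<forall>(k::nat) (a::'b). 0 < k \<longrightarrow> of_nat k * a = 0 \<longrightarrow> a = 0) \<and>
     (\<forall>(a::'b) (k::nat). \<exists>c::'b. of_nat (fact k) * c = (\<Prod>i<k. a - of_nat i))"

text \<open>A multation mu : A -> B is a multiset of pairs; its source/target are the
  multisets of first/second coordinates.\<close>
definition msrc :: "('x \<times> 'x) multiset \<Rightarrow> 'x multiset" where
  "msrc mu = image_mset fst mu"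
definition mtgt :: "('x \<times> 'x) multiset \<Rightarrow> 'x multiset" where
  "mtgt mu = image_mset snd mu"

definition multations :: "'x multiset \<Rightarrow> 'x multiset \<Rightarrow> ('x \<times> 'x) multiset set" where
  "multations A B = {mu. msrc mu = A \<and> mtgt mu = B}"

definition mdiag :: "'x multiset \<Rightarrow> ('x \<times> 'x) multiset" where
  "mdiag A = image_mset (\<lambda>a. (a, a)) A"

definition comp_triples ::
  "('x \<times> 'x) multiset \<Rightarrow> ('x \<times> 'x) multiset \<Rightarrow> ('x \<times> 'x \<times> 'x) multiset set" where
  "comp_triples nu mu = {K. image_mset (\<lambda>(a,b,c). (a,b)) K = nu \<and> image_mset (\<lambda>(a,b,c). (b,c)) K = mu}"

definition proj13 :: "('x \<times> 'x \<times> 'x) multiset \<Rightarrow> ('x \<times> 'x) multiset" where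
  "proj13 K = image_mset (\<lambda>(a,b,c). (a,c)) K"

definition comp_coeff :: "('x \<times> 'x \<times> 'x) multiset \<Rightarrow> nat" where
  "comp_coeff K = (\<Prod>q\<in>set_mset (proj13 K). fact (count (proj13 K) q))
                   div (\<Prod>t\<in>set_mset K. fact (count K t))"

text \<open>A linear functor J : MSet_n -> Mod is given (on single multisets; it extends
  additively to formal direct sums) by a B-module J(A) for each multiset A with |A| = n,
  realised as a submodule JO A of an ambient B-module 'm, and a B-linear map
  JM mu : J(A) -> J(B) for every multation mu : A -> B (basis element of MSet_n(A,B));
  a general morphism acts by B-linear extension.\<close>
definition linear_functor_MSet ::
  "nat \<Rightarrow> ('b::comm_ring_1 \<Rightarrow> 'm::ab_group_add \<Rightarrow> 'm) \<Rightarrow> ('x multiset \<Rightarrow> 'm set)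
     \<Rightarrow> (('x \<times> 'x) multiset \<Rightarrow> 'm \<Rightarrow> 'm) \<Rightarrow> bool" where
  "linear_functor_MSet n scale JO JM \<longleftrightarrow>
     (\<forall>A. size A = n \<longrightarrow> module.subspace scale (JO A)) \<and>
     (\<forall>mu. size mu = n \<longrightarrow>
        (\<forall>v\<in>JO (msrc mu). JM mu v \<in> JO (mtgt mu)) \<and>
        (\<forall>v\<in>JO (msrc mu). \<forall>w\<in>JO (msrc mu). JM mu (v + w) = JM mu v + JM mu w) \<and>
        (\<forall>c. \<forall>v\<in>JO (msrc mu). JM mu (scale c v) = scale c (JM mu v))) \<and>
     (\<forall>A. size A = n \<longrightarrow> (\<forall>v\<in>JO A. JM (mdiag A) v = v)) \<and>
     (\<forall>nu mu. size nu = n \<longrightarrow> mtgt nu = msrc mu \<longrightarrow>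
        (\<forall>v\<in>JO (msrc nu).
           JM mu (JM nu v) = (\<Sum>K\<in>comp_triples nu mu. scale (of_nat (comp_coeff K)) (JM (proj13 K) v))))"

definition msets_in :: "'x set \<Rightarrow> nat \<Rightarrow> 'x multiset set" where
  "msets_in X n = {A. set_mset A \<subseteq> X \<and> size A = n}"

text \<open>Elements of a direct sum (+)_{A in I} J(A) are functions v with v A in J(A) for
  A in I and v A = 0 otherwise.\<close>
definition dsum :: "'x multiset set \<Rightarrow> ('x multiset \<Rightarrow> 'm set) \<Rightarrow> ('x multiset \<Rightarrow> 'm::zero) set" where
  "dsum I JO = {v. (\<forall>A\<in>I. v A \<in> JO A) \<and> (\<forall>A. A \<notin> I \<longrightarrow> v A = 0)}"

text \<open>Psi^{-1}(J)(B^X) = (+)_{#A subseteq X, |A| = n} J(A).\<close>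
definition PsiInv_obj :: "nat \<Rightarrow> ('x multiset \<Rightarrow> 'm set) \<Rightarrow> 'x set \<Rightarrow> ('x multiset \<Rightarrow> 'm::zero) set" where
  "PsiInv_obj n JO X = dsum (msets_in X n) JO"

text \<open>A linear map s : B^X -> B^Y is given by its matrix s y x (entries for x in X,
  y in Y).  s^mu = prod_{(x,y)} s_{yx}^{m_mu(x,y)}.\<close>
definition smon :: "('x \<Rightarrow> 'x \<Rightarrow> 'b::comm_ring_1) \<Rightarrow> ('x \<times> 'x) multiset \<Rightarrow> 'b" where
  "smon s mu = (\<Prod>q\<in>set_mset mu. s (snd q) (fst q) ^ count mu q)"

definition PsiInv_map ::
  "nat \<Rightarrow> ('b::comm_ring_1 \<Rightarrow> 'm::ab_group_add \<Rightarrow> 'm) \<Rightarrow> (('x \<times> 'x) multiset \<Rightarrow> 'm \<Rightarrow> 'm)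
     \<Rightarrow> 'x set \<Rightarrow> 'x set \<Rightarrow> ('x \<Rightarrow> 'x \<Rightarrow> 'b) \<Rightarrow> ('x multiset \<Rightarrow> 'm) \<Rightarrow> ('x multiset \<Rightarrow> 'm)" where
  "PsiInv_map n scale JM X Y s v =
     (\<lambda>B. if B \<in> msets_in Y n then
            (\<Sum>A\<in>msets_in X n. \<Sum>mu\<in>multations A B. scale (smon s mu) (JM mu (v A)))
          else 0)"

text \<open>F(alpha_1 <> ... <> alpha_k) = sum_{I} (-1)^{k-|I|} F(sum_{i in I} alpha_i),
  for a family alpha indexed by a finite set Ix.\<close>
definition cross_eff ::
  "('b::comm_ring_1 \<Rightarrow> 'm::ab_group_add \<Rightarrow> 'm) \<Rightarrow> (('x \<Rightarrow> 'x \<Rightarrow> 'b) \<Rightarrow> 'v \<Rightarrow> ('x multiset \<Rightarrow> 'm))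
     \<Rightarrow> 'i set \<Rightarrow> ('i \<Rightarrow> 'x \<Rightarrow> 'x \<Rightarrow> 'b) \<Rightarrow> 'v \<Rightarrow> ('x multiset \<Rightarrow> 'm)" where
  "cross_eff scale Fm Ix alpha v =
     (\<lambda>B. \<Sum>I\<in>Pow Ix. scale ((-1) ^ (card Ix - card I))
                         (Fm (\<lambda>y x. \<Sum>i\<in>I. alpha i y x) v B))"

text \<open>b sigma_{yx} : e_x |-> b e_y, as a matrix; pi_x = sigma_{xx}.\<close>
definition sigma :: "'b::comm_ring_1 \<Rightarrow> 'x \<Rightarrow> 'x \<Rightarrow> ('x \<Rightarrow> 'x \<Rightarrow> 'b)" where
  "sigma b y x = (\<lambda>y' x'. if y' = y \<and> x' = x then b else 0)"

text \<open>Phi(F)(X) = Im F(<>_{x in X} pi_x), for F = Psi^{-1}(J).\<close>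
definition Phi_PsiInv_obj ::
  "nat \<Rightarrow> ('b::comm_ring_1 \<Rightarrow> 'm::ab_group_add \<Rightarrow> 'm) \<Rightarrow> ('x multiset \<Rightarrow> 'm set)
     \<Rightarrow> (('x \<times> 'x) multiset \<Rightarrow> 'm \<Rightarrow> 'm) \<Rightarrow> 'x set \<Rightarrow> ('x multiset \<Rightarrow> 'm) set" where
  "Phi_PsiInv_obj n scale JO JM X =
     cross_eff scale (PsiInv_map n scale JM X X) X (\<lambda>x. sigma 1 x x) ` PsiInv_obj n JO X"

text \<open>A maze is represented by the list of its passage occurrences (x, y, label);
  passages run from X to Y, every x in X is a source and every y in Y a target.\<close>
definition is_maze :: "'x set \<Rightarrow> 'x set \<Rightarrow> ('x \<times> 'x \<times> 'b) list \<Rightarrow> bool" where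
  "is_maze X Y P \<longleftrightarrow> finite X \<and> finite Y \<and>
     (\<forall>p\<in>set P. fst p \<in> X \<and> fst (snd p) \<in> Y) \<and>
     X \<subseteq> fst ` set P \<and> Y \<subseteq> (fst \<circ> snd) ` set P"

text \<open>Phi(F)(P) is the restriction of F(<>_{p in P} pbar sigma_{y_p x_p}).\<close>
definition Phi_PsiInv_map ::
  "nat \<Rightarrow> ('b::comm_ring_1 \<Rightarrow> 'm::ab_group_add \<Rightarrow> 'm) \<Rightarrow> (('x \<times> 'x) multiset \<Rightarrow> 'm \<Rightarrow> 'm)
     \<Rightarrow> 'x set \<Rightarrow> 'x set \<Rightarrow> ('x \<times> 'x \<times> 'b) list \<Rightarrow> ('x multiset \<Rightarrow> 'm) \<Rightarrow> ('x multiset \<Rightarrow> 'm)" where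
  "Phi_PsiInv_map n scale JM X Y P =
     cross_eff scale (PsiInv_map n scale JM X Y) {..<length P}
       (\<lambda>i. sigma (snd (snd (P ! i))) (fst (snd (P ! i))) (fst (P ! i)))"

text \<open>J(A_n(X)) = (+)_{#A = X, |A| = n} J(A).\<close>
definition JA_obj :: "nat \<Rightarrow> ('x multiset \<Rightarrow> 'm set) \<Rightarrow> 'x set \<Rightarrow> ('x multiset \<Rightarrow> 'm::zero) set" where
  "JA_obj n JO X = dsum {A. set_mset A = X \<and> size A = n} JO"

text \<open>Assignments d_p >= 1 with sum n, indexed by the passage occurrences.\<close>
definition assignments :: "nat \<Rightarrow> nat \<Rightarrow> nat list set" where
  "assignments k n = {d. length d = k \<and> (\<forall>i<k. 1 \<le> d ! i) \<and> sum_list d = n}"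

text \<open>The multation underlying prod_p [x_p; y_p]^{[d_p]}.\<close>
definition dmult :: "('x \<times> 'x \<times> 'b) list \<Rightarrow> nat list \<Rightarrow> ('x \<times> 'x) multiset" where
  "dmult P d = (\<Sum>i<length P. replicate_mset (d ! i) (fst (P ! i), fst (snd (P ! i))))"

text \<open>Using [a;b]^{[i]}[a;b]^{[j]} = binom(i+j,i) [a;b]^{[i+j]}:
  prod_p [x_p;y_p]^{[d_p]} = (prod_q m(q)! / prod_p d_p!) * dmult P d.\<close>
definition dp_coeff :: "('x \<times> 'x \<times> 'b) list \<Rightarrow> nat list \<Rightarrow> nat" where
  "dp_coeff P d = (\<Prod>q\<in>set_mset (dmult P d). fact (count (dmult P d) q))
                  div (\<Prod>i<length P. fact (d ! i))"

text \<open>J(A_n(P)) with A_n(P) = sum_d prod_p pbar^{d_p} [x_p;y_p]^{[d_p]}.\<close>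
definition JA_map ::
  "nat \<Rightarrow> ('b::comm_ring_1 \<Rightarrow> 'm::ab_group_add \<Rightarrow> 'm) \<Rightarrow> (('x \<times> 'x) multiset \<Rightarrow> 'm \<Rightarrow> 'm)
     \<Rightarrow> ('x \<times> 'x \<times> 'b) list \<Rightarrow> ('x multiset \<Rightarrow> 'm) \<Rightarrow> ('x multiset \<Rightarrow> 'm)" where
  "JA_map n scale JM P v =
     (\<lambda>B. \<Sum>d\<in>assignments (length P) n.
            if mtgt (dmult P d) = B then
              scale (of_nat (dp_coeff P d) * (\<Prod>i<length P. snd (snd (P ! i)) ^ (d ! i)))
                    (JM (dmult P d) (v (msrc (dmult P d))))
            else 0)"

end

theory Submission
  imports Defs "HOL-Library.FuncSet"
begin

lemma finite_msets_in: "finite X \<Longrightarrow> finite (msets_in X n)"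
  unfolding msets_in_def using finite_multisets_of_size[of X n]
  by (simp add: multisets_of_size_def)

lemma finite_multations: "finite (multations A B)"
proof -
  have "multations A B \<subseteq> msets_in (set_mset A \<times> set_mset B) (size A)"
  proof
    fix mu assume "mu \<in> multations A B"
    hence A: "image_mset fst mu = A" and B: "image_mset snd mu = B"
      by (auto simp: multations_def msrc_def mtgt_def)
    have "set_mset mu \<subseteq> set_mset A \<times> set_mset B"
    proof
      fix q assume "q \<in># mu"
      hence "fst q \<in># image_mset fst mu" "snd q \<in># image_mset snd mu" by simp_all
      hence "fst q \<in># A" "snd q \<in># B" unfolding A B .
      thus "q \<in> set_mset A \<times> set_mset B" by (cases q) auto
    qed
    moreover have "size mu = size A" unfolding A[symmetric] by simp
    ultimately show "mu \<in> msets_in (set_mset A \<times> set_mset B) (size A)"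
      by (simp add: msets_in_def)
  qed
  thus ?thesis by (rule finite_subset) (rule finite_msets_in, simp)
qed

lemma smon_superset:
  assumes "finite S" "set_mset mu \<subseteq> S"
  shows "smon s mu = (\<Prod>q\<in>S. s (snd q) (fst q) ^ count mu q)"
  unfolding smon_def
  by (rule prod.mono_neutral_left) (use assms in \<open>auto simp: not_in_iff\<close>)

definition rsum :: "nat \<Rightarrow> (nat \<Rightarrow> 'a) \<Rightarrow> (nat \<Rightarrow> nat) \<Rightarrow> 'a multiset" where
  "rsum k f d = (\<Sum>i<k. replicate_mset (d i) (f i))"

lemma count_rsum: "count (rsum k f d) x = (\<Sum>i<k. if f i = x then d i else 0)"
  unfolding rsum_def count_sum by (rule sum.cong) auto

lemma size_rsum: "size (rsum k f d) = (\<Sum>i<k. d i)"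
  unfolding rsum_def size_multiset_sum by simp

lemma image_rsum: "image_mset g (rsum k f d) = rsum k (g \<circ> f) d"
  unfolding rsum_def by (induction k) auto

lemma set_rsum: "set_mset (rsum k f d) = f ` {i. i < k \<and> d i \<noteq> 0}"
proof -
  have "x \<in># rsum k f d \<longleftrightarrow> (\<exists>i<k. d i \<noteq> 0 \<and> f i = x)" for x
  proof -
    have "x \<in># rsum k f d \<longleftrightarrow> count (rsum k f d) x \<noteq> 0" by (simp add: count_eq_zero_iff)
    also have "\<dots> \<longleftrightarrow> (\<exists>i<k. d i \<noteq> 0 \<and> f i = x)" unfolding count_rsum by auto
    finally show ?thesis .
  qed
  thus ?thesis by auto
qed

lemma rsum_split:
  assumes "j < k"
  shows "rsum k f d = replicate_mset (d j) (f j) + (\<Sum>i\<in>{..<k}-{j}. replicate_mset (d i) (f i))"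
  unfolding rsum_def using assms by (subst sum.remove[of _ j]) auto

lemma rsum_upd:
  assumes "j < k"
  shows "rsum k f (d(j:=t)) + replicate_mset (d j) (f j) = rsum k f d + replicate_mset t (f j)"
proof -
  have "(\<Sum>i\<in>{..<k}-{j}. replicate_mset ((d(j:=t)) i) (f i)) = (\<Sum>i\<in>{..<k}-{j}. replicate_mset (d i) (f i))"
    by (rule sum.cong) auto
  thus ?thesis using rsum_split[OF assms, of f d] rsum_split[OF assms, of f "d(j:=t)"]
    by (simp add: add_ac)
qed


definition sI :: "(nat \<Rightarrow> 'x \<times> 'x) \<Rightarrow> (nat \<Rightarrow> 'b::comm_ring_1) \<Rightarrow> nat set \<Rightarrow> 'x \<Rightarrow> 'x \<Rightarrow> 'b" where
  "sI pr b I = (\<lambda>y x. \<Sum>i\<in>I. if pr i = (x, y) then b i else 0)"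

definition cf :: "nat \<Rightarrow> (nat \<Rightarrow> 'x \<times> 'x) \<Rightarrow> (nat \<Rightarrow> nat) \<Rightarrow> nat" where
  "cf k pr d = (\<Prod>q\<in>set_mset (rsum k pr d). fact (count (rsum k pr d) q)) div (\<Prod>i<k. fact (d i))"

definition DS :: "nat \<Rightarrow> (nat \<Rightarrow> 'x \<times> 'x) \<Rightarrow> nat set \<Rightarrow> ('x \<times> 'x) multiset \<Rightarrow> (nat \<Rightarrow> nat) set" where
  "DS k pr I mu = {d. (\<forall>i. i \<notin> I \<longrightarrow> d i = 0) \<and> rsum k pr d = mu}"

lemma fin_zero_outside:
  assumes "finite I"
  shows "finite {d::nat\<Rightarrow>nat. (\<forall>i. i \<notin> I \<longrightarrow> d i = 0) \<and> (\<forall>i. d i \<le> N)}" (is "finite ?S")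
proof (rule finite_imageD)
  show "inj_on (\<lambda>d. restrict d I) ?S"
  proof (rule inj_onI)
    fix d e assume "d \<in> ?S" "e \<in> ?S" "restrict d I = restrict e I"
    thus "d = e" by (auto simp: fun_eq_iff restrict_def) (metis)
  qed
  have "(\<lambda>d. restrict d I) ` ?S \<subseteq> PiE I (\<lambda>_. {..N})" by auto
  thus "finite ((\<lambda>d. restrict d I) ` ?S)"
    by (rule finite_subset) (simp add: assms finite_PiE)
qed

lemma le_count_rsum: "i < k \<Longrightarrow> d i \<le> count (rsum k f d) (f i)"
  unfolding count_rsum
  using member_le_sum[of i "{..<k}" "\<lambda>j. if f j = f i then d j else 0"] by auto

lemma finite_DS:
  assumes "I \<subseteq> {..<k}"
  shows "finite (DS k pr I mu)"
proof -
  have "DS k pr I mu \<subseteq> {d::nat\<Rightarrow>nat. (\<forall>i. i \<notin> I \<longrightarrow> d i = 0) \<and> (\<forall>i. d i \<le> size mu)}"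
  proof safe
    fix d i assume d: "d \<in> DS k pr I mu"
    show "d i \<le> size mu"
    proof (cases "i \<in> I")
      case True
      hence "i < k" using assms by auto
      hence "d i \<le> count (rsum k pr d) (pr i)" by (rule le_count_rsum)
      also have "\<dots> \<le> size (rsum k pr d)" by (rule count_le_size)
      finally show ?thesis using d by (simp add: DS_def)
    qed (use d in \<open>auto simp: DS_def\<close>)
  qed (auto simp: DS_def)
  thus ?thesis
    by (rule finite_subset) (rule fin_zero_outside, use assms finite_subset in blast)
qed

lemma fact_prod_dvd:
  "finite G \<Longrightarrow> (\<Prod>i\<in>G. fact (d i) :: nat) dvd fact (\<Sum>i\<in>G. d i)"
proof (induction G rule: finite_induct)
  case (insert a G)
  have "fact (d a) * (\<Prod>i\<in>G. fact (d i) :: nat) dvd fact (d a) * fact (\<Sum>i\<in>G. d i)"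
    using insert by simp
  also have "\<dots> dvd fact (d a + (\<Sum>i\<in>G. d i))" by (rule fact_fact_dvd_fact)
  finally show ?case using insert by simp
qed simp

lemma num_alt:
  "(\<Prod>q\<in>set_mset (rsum k pr d). fact (count (rsum k pr d) q)) =
   (\<Prod>q\<in>pr ` {..<k}. fact (count (rsum k pr d) q) :: nat)"
proof (rule prod.mono_neutral_left)
  show "set_mset (rsum k pr d) \<subseteq> pr ` {..<k}" by (auto simp: set_rsum)
  show "\<forall>q\<in>pr ` {..<k} - set_mset (rsum k pr d). fact (count (rsum k pr d) q) = (1::nat)"
    by (auto simp: not_in_iff)
qed simp

lemma count_rsum_group: "count (rsum k pr d) q = (\<Sum>i\<in>{i\<in>{..<k}. pr i = q}. d i)"
  unfolding count_rsum by (rule sum.inter_filter[symmetric]) simp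

lemma cf_dvd:
  "(\<Prod>i<k. fact (d i)) dvd (\<Prod>q\<in>set_mset (rsum k pr d). fact (count (rsum k pr d) q) :: nat)"
proof -
  have "(\<Prod>i<k. fact (d i)) = (\<Prod>q\<in>pr ` {..<k}. \<Prod>i\<in>{i\<in>{..<k}. pr i = q}. fact (d i) :: nat)"
    by (rule prod.group[symmetric]) auto
  also have "\<dots> dvd (\<Prod>q\<in>pr ` {..<k}. fact (count (rsum k pr d) q))"
    unfolding count_rsum_group by (rule prod_dvd_prod) (rule fact_prod_dvd, simp)
  finally show ?thesis by (simp add: num_alt)
qed

lemma cf_upd:
  assumes "j < k" "d j = 0"
  shows "cf k pr (d(j:=t)) = (count (rsum k pr (d(j:=t))) (pr j) choose t) * cf k pr d"
proof -
  let ?T = "pr ` {..<k}"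
  have rs: "rsum k pr (d(j:=t)) = rsum k pr d + replicate_mset t (pr j)"
    using rsum_upd[OF assms(1), of pr d t] assms(2) by simp
  define m0 where "m0 = count (rsum k pr d) (pr j)"
  define R where "R = (\<Prod>q\<in>?T-{pr j}. fact (count (rsum k pr d) q) :: nat)"
  define Q where "Q = (\<Prod>i\<in>{..<k}-{j}. fact (d i) :: nat)"
  have pj: "pr j \<in> ?T" using assms by auto
  have N0: "(\<Prod>q\<in>?T. fact (count (rsum k pr d) q)) = fact m0 * R"
    unfolding R_def m0_def by (subst prod.remove[OF _ pj]) auto
  have R': "(\<Prod>q\<in>?T-{pr j}. fact (count (rsum k pr (d(j:=t))) q)) = R"
    unfolding R_def rs by (rule prod.cong) auto
  have N1: "(\<Prod>q\<in>?T. fact (count (rsum k pr (d(j:=t))) q)) = fact (m0 + t) * R"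
    using R' unfolding m0_def rs by (subst prod.remove[OF _ pj]) auto
  have D0: "(\<Prod>i<k. fact (d i)) = Q"
    unfolding Q_def using assms by (subst prod.remove[of _ j]) auto
  have Q': "(\<Prod>i\<in>{..<k}-{j}. fact ((d(j:=t)) i)) = Q"
    unfolding Q_def by (rule prod.cong) auto
  have D1: "(\<Prod>i<k. fact ((d(j:=t)) i)) = fact t * Q"
    using Q' assms by (subst prod.remove[of _ j]) auto
  have dv: "Q dvd fact m0 * R"
    using cf_dvd[where k=k and d=d and pr=pr] by (simp add: num_alt N0 D0)
  have cnt: "count (rsum k pr (d(j:=t))) (pr j) = m0 + t"
    unfolding rs m0_def by simp
  have "cf k pr (d(j:=t)) = (fact (m0 + t) * R) div (fact t * Q)"
    unfolding cf_def num_alt N1 D1 ..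
  also have "fact (m0 + t) = fact t * (fact m0 * ((m0 + t) choose t) :: nat)"
    using binomial_fact_lemma[of t "m0 + t"] by (simp add: algebra_simps)
  also have "fact t * (fact m0 * ((m0 + t) choose t)) * R div (fact t * Q) =
             ((m0 + t) choose t) * (fact m0 * R) div Q"
    by (simp add: algebra_simps)
  also have "\<dots> = ((m0 + t) choose t) * (fact m0 * R div Q)"
    using dv by (simp add: div_mult_swap)
  also have "fact m0 * R div Q = cf k pr d"
    unfolding cf_def num_alt N0 D0 ..
  finally show ?thesis using cnt by (simp add: fun_upd_def)
qed


lemma smon_zero: "smon (\<lambda>y x. 0 :: 'b::comm_ring_1) mu = (if mu = {#} then 1 else 0)"
proof (cases "mu = {#}")
  case False
  then obtain q where q: "q \<in># mu" by (metis multiset_nonemptyE)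
  have "smon (\<lambda>y x. 0 :: 'b) mu = 0"
  proof -
    have "0 < count mu q" using q by simp
    thus ?thesis unfolding smon_def by (intro prod_zero bexI[of _ q]) (use q in \<open>auto simp: power_0_left count_eq_zero_iff\<close>)
  qed
  thus ?thesis using False by simp
qed (simp add: smon_def)

lemma DS_empty: "DS k pr {} mu = (if mu = {#} then {\<lambda>_. 0} else {})"
  by (auto simp: DS_def rsum_def fun_eq_iff)

lemma cf_zero: "cf k pr (\<lambda>_. 0) = 1"
  by (simp add: cf_def rsum_def)

lemma sI_insert: "sI pr b (insert j I) y x = (if pr j = (x, y) then b j else 0) + sI pr b I y x"
  if "finite I" "j \<notin> I" using that by (simp add: sI_def)

lemma smon_expand:
  assumes "I \<subseteq> {..<k}"
  shows "smon (sI pr b I) mu = (\<Sum>d\<in>DS k pr I mu. of_nat (cf k pr d) * (\<Prod>i\<in>I. b i ^ d i))"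
proof -
  have "finite I" using assms finite_subset by blast
  thus ?thesis using assms
  proof (induction I arbitrary: mu rule: finite_induct)
    case empty
    have "sI pr b {} = (\<lambda>y x. 0)" by (simp add: sI_def fun_eq_iff)
    thus ?case by (simp add: smon_zero DS_empty cf_zero)
  next
    case (insert j I)
    have jk: "j < k" and Ik: "I \<subseteq> {..<k}" using insert.prems by auto
    define g where "g q = sI pr b I (snd q) (fst q)" for q
    define T where "T = insert (pr j) (set_mset mu)"
    define m where "m = count mu (pr j)"
    define mu' where "mu' t = mu - replicate_mset t (pr j)" for t
    have finT: "finite T" by (simp add: T_def)
    have pjT: "pr j \<in> T" by (simp add: T_def)
    define R where "R = (\<Prod>q\<in>T-{pr j}. g q ^ count mu q)"
    have "smon (sI pr b (insert j I)) mu = (\<Prod>q\<in>T. sI pr b (insert j I) (snd q) (fst q) ^ count mu q)"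
      by (rule smon_superset) (auto simp: T_def finT)
    also have "\<dots> = (b j + g (pr j)) ^ m * R"
    proof -
      have "(\<Prod>q\<in>T-{pr j}. sI pr b (insert j I) (snd q) (fst q) ^ count mu q) = R"
        unfolding R_def g_def
        by (rule prod.cong) (auto simp: sI_insert insert.hyps)
      thus ?thesis
        by (subst prod.remove[OF finT pjT]) (simp add: sI_insert insert.hyps g_def m_def)
    qed
    also have "\<dots> = (\<Sum>t\<le>m. of_nat (m choose t) * b j ^ t * (g (pr j) ^ (m - t) * R))"
      by (simp add: binomial_ring sum_distrib_right sum_distrib_left algebra_simps)
    also have "\<dots> = (\<Sum>t\<le>m. of_nat (m choose t) * b j ^ t * smon (sI pr b I) (mu' t))"
    proof (rule sum.cong[OF refl])
      fix t assume "t \<in> {..m}"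
      have "smon (sI pr b I) (mu' t) = (\<Prod>q\<in>T. g q ^ count (mu' t) q)"
        unfolding g_def by (rule smon_superset) (auto simp: T_def finT mu'_def dest: in_diffD)
      also have "\<dots> = g (pr j) ^ (m - t) * R"
      proof -
        have "(\<Prod>q\<in>T-{pr j}. g q ^ count (mu' t) q) = R"
          unfolding R_def by (rule prod.cong) (auto simp: mu'_def)
        thus ?thesis
          by (subst prod.remove[OF finT pjT]) (simp add: mu'_def m_def)
      qed
      finally show "of_nat (m choose t) * b j ^ t * (g (pr j) ^ (m - t) * R) =
                    of_nat (m choose t) * b j ^ t * smon (sI pr b I) (mu' t)" by simp
    qed
    also have "\<dots> = (\<Sum>t\<le>m. \<Sum>d\<in>DS k pr I (mu' t).
                        of_nat (m choose t) * b j ^ t * (of_nat (cf k pr d) * (\<Prod>i\<in>I. b i ^ d i)))"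
      by (simp add: insert.IH[OF Ik] sum_distrib_left)
    also have "\<dots> = (\<Sum>p\<in>Sigma {..m} (\<lambda>t. DS k pr I (mu' t)).
                        of_nat (m choose fst p) * b j ^ fst p * (of_nat (cf k pr (snd p)) * (\<Prod>i\<in>I. b i ^ snd p i)))"
      by (subst sum.Sigma) (auto simp: finite_DS[OF Ik] split_beta)
    also have "\<dots> = (\<Sum>e\<in>DS k pr (insert j I) mu. of_nat (cf k pr e) * (\<Prod>i\<in>insert j I. b i ^ e i))"
    proof (rule sum.reindex_bij_witness[where j = "\<lambda>p. (snd p)(j := fst p)" and i = "\<lambda>e. (e j, e(j := 0))"])
      fix p assume p: "p \<in> Sigma {..m} (\<lambda>t. DS k pr I (mu' t))"
      obtain t d where pd: "p = (t, d)" by (cases p)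
      have tm: "t \<le> m" and d0: "\<forall>i. i \<notin> I \<longrightarrow> d i = 0" and dr: "rsum k pr d = mu' t"
        using p pd by (auto simp: DS_def)
      have dj: "d j = 0" using d0 insert.hyps by auto
      show "(((snd p)(j := fst p)) j, ((snd p)(j := fst p))(j := 0)) = p"
        using pd dj by (auto simp: fun_eq_iff)
      have rs: "rsum k pr (d(j := t)) = mu"
      proof -
        have "rsum k pr (d(j := t)) = rsum k pr d + replicate_mset t (pr j)"
          using rsum_upd[OF jk, of pr d t] dj by simp
        also have "\<dots> = mu"
          unfolding dr mu'_def
          by (rule subset_mset.diff_add) (use tm in \<open>simp add: m_def flip: count_le_replicate_mset_subset_eq\<close>)
        finally show ?thesis .
      qed
      show "(snd p)(j := fst p) \<in> DS k pr (insert j I) mu"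
        using pd d0 rs by (auto simp: DS_def)
      have "cf k pr (d(j := t)) = (m choose t) * cf k pr d"
        using cf_upd[where j=j and k=k and d=d and pr=pr and t=t, OF jk dj] rs by (simp add: m_def)
      moreover have "(\<Prod>i\<in>insert j I. b i ^ (d(j := t)) i) = b j ^ t * (\<Prod>i\<in>I. b i ^ d i)"
      proof -
        have "(\<Prod>i\<in>I. b i ^ (d(j := t)) i) = (\<Prod>i\<in>I. b i ^ d i)"
          by (rule prod.cong) (use insert.hyps in auto)
        thus ?thesis using insert.hyps by simp
      qed
      ultimately show "of_nat (cf k pr ((snd p)(j := fst p))) * (\<Prod>i\<in>insert j I. b i ^ ((snd p)(j := fst p)) i) =
         of_nat (m choose fst p) * b j ^ fst p * (of_nat (cf k pr (snd p)) * (\<Prod>i\<in>I. b i ^ snd p i))"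
        using pd by (simp add: algebra_simps)
    next
      fix e assume e: "e \<in> DS k pr (insert j I) mu"
      have e0: "\<forall>i. i \<notin> insert j I \<longrightarrow> e i = 0" and er: "rsum k pr e = mu"
        using e by (auto simp: DS_def)
      show "(snd (e j, e(j := 0)))(j := fst (e j, e(j := 0))) = e" by (simp add: fun_eq_iff)
      have "e j \<le> m" unfolding m_def using le_count_rsum[OF jk, of e pr] er by simp
      moreover have "rsum k pr (e(j := 0)) = mu' (e j)"
      proof -
        have "rsum k pr (e(j := 0)) + replicate_mset (e j) (pr j) = mu"
          using rsum_upd[OF jk, of pr e 0] er by simp
        thus ?thesis unfolding mu'_def by (metis add_diff_cancel_right')
      qed
      ultimately show "(e j, e(j := 0)) \<in> Sigma {..m} (\<lambda>t. DS k pr I (mu' t))"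
        using e0 by (auto simp: DS_def)
    qed
    finally show ?case .
  qed
qed


definition E :: "nat \<Rightarrow> nat set \<Rightarrow> nat \<Rightarrow> (nat \<Rightarrow> nat) set" where
  "E k I n = {d. (\<forall>i. i \<notin> I \<longrightarrow> d i = 0) \<and> (\<Sum>i<k. d i) = n}"

lemma finite_E:
  assumes "I \<subseteq> {..<k}"
  shows "finite (E k I n)"
proof -
  have "E k I n \<subseteq> {d::nat\<Rightarrow>nat. (\<forall>i. i \<notin> I \<longrightarrow> d i = 0) \<and> (\<forall>i. d i \<le> n)}"
  proof safe
    fix d i assume d: "d \<in> E k I n"
    show "d i \<le> n"
    proof (cases "i \<in> I")
      case True
      hence "i \<in> {..<k}" using assms by auto
      hence "d i \<le> (\<Sum>i<k. d i)" by (rule member_le_sum) auto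
      thus ?thesis using d by (simp add: E_def)
    qed (use d in \<open>auto simp: E_def\<close>)
  qed (auto simp: E_def)
  thus ?thesis
    by (rule finite_subset) (rule fin_zero_outside, use assms finite_subset in blast)
qed

lemma msrc_rsum: "msrc (rsum k pr d) = rsum k (fst \<circ> pr) d"
  by (simp add: msrc_def image_rsum)
lemma mtgt_rsum: "mtgt (rsum k pr d) = rsum k (snd \<circ> pr) d"
  by (simp add: mtgt_def image_rsum)

lemma rsum_in_msets:
  assumes "\<forall>i<k. f i \<in> X" "(\<Sum>i<k. d i) = n"
  shows "rsum k f d \<in> msets_in X n"
  using assms by (auto simp: msets_in_def set_rsum size_rsum)

definition Hterm where
  "Hterm n scale JM k pr b v B d =
     (if mtgt (rsum k pr d) = B then
        scale (of_nat (cf k pr d) * (\<Prod>i<k. b i ^ d i)) (JM (rsum k pr d) (v (msrc (rsum k pr d))))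
      else 0)"

lemma psi_expand:
  assumes ms: "module scale" and fX: "finite X" and fY: "finite Y" and Ik: "I \<subseteq> {..<k}"
    and pr: "\<forall>i<k. fst (pr i) \<in> X \<and> snd (pr i) \<in> Y"
  shows "PsiInv_map n scale JM X Y (sI pr b I) v B = (\<Sum>d\<in>E k I n. Hterm n scale JM k pr b v B d)"
proof (cases "B \<in> msets_in Y n")
  case False
  have "Hterm n scale JM k pr b v B d = 0" if "d \<in> E k I n" for d
  proof -
    have "mtgt (rsum k pr d) \<in> msets_in Y n"
      unfolding mtgt_rsum by (rule rsum_in_msets) (use pr that in \<open>auto simp: E_def\<close>)
    thus ?thesis using False by (auto simp: Hterm_def)
  qed
  thus ?thesis using False by (simp add: PsiInv_map_def)
next
  case True
  define h where "h d = scale (of_nat (cf k pr d) * (\<Prod>i<k. b i ^ d i)) (JM (rsum k pr d) (v (msrc (rsum k pr d))))" for d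
  define T where "T = {d \<in> E k I n. mtgt (rsum k pr d) = B}"
  define S where "S = Sigma (msets_in X n) (\<lambda>A. Sigma (multations A B) (\<lambda>mu. DS k pr I mu))"
  have "PsiInv_map n scale JM X Y (sI pr b I) v B =
          (\<Sum>A\<in>msets_in X n. \<Sum>mu\<in>multations A B. scale (smon (sI pr b I) mu) (JM mu (v A)))"
    using True by (simp add: PsiInv_map_def)
  also have "\<dots> = (\<Sum>A\<in>msets_in X n. \<Sum>mu\<in>multations A B. \<Sum>d\<in>DS k pr I mu.
                     scale (of_nat (cf k pr d) * (\<Prod>i\<in>I. b i ^ d i)) (JM mu (v A)))"
    by (simp add: smon_expand[OF Ik] module.scale_sum_left[OF ms])
  also have "\<dots> = (\<Sum>(A, mu, d)\<in>S. scale (of_nat (cf k pr d) * (\<Prod>i\<in>I. b i ^ d i)) (JM mu (v A)))"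
  proof -
    have "(\<Sum>A\<in>msets_in X n. \<Sum>mu\<in>multations A B. \<Sum>d\<in>DS k pr I mu.
                     scale (of_nat (cf k pr d) * (\<Prod>i\<in>I. b i ^ d i)) (JM mu (v A))) =
          (\<Sum>A\<in>msets_in X n. \<Sum>(mu, d)\<in>Sigma (multations A B) (DS k pr I).
                     scale (of_nat (cf k pr d) * (\<Prod>i\<in>I. b i ^ d i)) (JM mu (v A)))"
      by (rule sum.cong[OF refl]) (rule sum.Sigma; simp add: finite_multations finite_DS[OF Ik])
    also have "\<dots> = (\<Sum>(A, mu, d)\<in>S. scale (of_nat (cf k pr d) * (\<Prod>i\<in>I. b i ^ d i)) (JM mu (v A)))"
      unfolding S_def
      by (rule sum.Sigma) (auto simp: finite_msets_in fX finite_multations finite_DS[OF Ik])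
    finally show ?thesis .
  qed
  also have "\<dots> = sum h T"
  proof (rule sum.reindex_bij_witness[where j = "\<lambda>(A, mu, d). d" and i = "\<lambda>d. (msrc (rsum k pr d), rsum k pr d, d)"])
    fix a assume a: "a \<in> S"
    obtain A mu d where ad: "a = (A, mu, d)" by (cases a) auto
    have d0: "\<forall>i. i \<notin> I \<longrightarrow> d i = 0" and dr: "rsum k pr d = mu"
      and mA: "msrc mu = A" and mB: "mtgt mu = B" and A: "A \<in> msets_in X n"
      using a ad by (auto simp: S_def DS_def multations_def)
    show "(case (case a of (A, mu, d) \<Rightarrow> d) of d \<Rightarrow> (msrc (rsum k pr d), rsum k pr d, d)) = a"
      using ad dr mA by simp
    have "(\<Sum>i<k. d i) = n"
    proof -
      have "(\<Sum>i<k. d i) = size mu" using dr size_rsum by metis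
      also have "\<dots> = size A" using mA by (metis msrc_def size_image_mset)
      finally show ?thesis using A by (simp add: msets_in_def)
    qed
    thus "(case a of (A, mu, d) \<Rightarrow> d) \<in> T"
      using ad d0 dr mB by (simp add: T_def E_def)
    have "(\<Prod>i<k. b i ^ d i) = (\<Prod>i\<in>I. b i ^ d i)"
      by (rule prod.mono_neutral_right) (use Ik d0 in auto)
    thus "h (case a of (A, mu, d) \<Rightarrow> d) =
          (case a of (A, mu, d) \<Rightarrow> scale (of_nat (cf k pr d) * (\<Prod>i\<in>I. b i ^ d i)) (JM mu (v A)))"
      using ad dr mA by (simp add: h_def)
  next
    fix d assume d: "d \<in> T"
    show "(case (msrc (rsum k pr d), rsum k pr d, d) of (A, mu, d) \<Rightarrow> d) = d" by simp
    have "msrc (rsum k pr d) \<in> msets_in X n"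
      unfolding msrc_rsum by (rule rsum_in_msets) (use pr d in \<open>auto simp: T_def E_def\<close>)
    thus "(msrc (rsum k pr d), rsum k pr d, d) \<in> S"
      using d by (auto simp: S_def T_def E_def DS_def multations_def)
  qed
  also have "\<dots> = (\<Sum>d\<in>E k I n. Hterm n scale JM k pr b v B d)"
    unfolding T_def h_def Hterm_def by (rule sum.inter_filter) (rule finite_E[OF Ik])
  finally show ?thesis .
qed


lemma sign_sum:
  assumes "finite K" "S \<subseteq> K"
  shows "(\<Sum>I | I \<in> Pow K \<and> S \<subseteq> I. (-1::'b::comm_ring_1) ^ (card K - card I)) = (if S = K then 1 else 0)"
proof -
  define f where "f T = (if T = S then 1 else (0::'b))" for T
  define g where "g T = (if S \<subseteq> T then 1 else (0::'b))" for T
  have "\<And>T. finite T \<Longrightarrow> g T = sum f (Pow T)"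
    unfolding f_def g_def by (simp add: sum.delta')
  hence "f K = (\<Sum>T\<in>Pow K. (-1) ^ (card K - card T) * g T)"
    by (rule inclusion_exclusion_mobius) (use assms in auto)
  also have "\<dots> = (\<Sum>T\<in>Pow K. if S \<subseteq> T then (-1) ^ (card K - card T) else 0)"
    unfolding g_def by (rule sum.cong) auto
  also have "\<dots> = (\<Sum>I | I \<in> Pow K \<and> S \<subseteq> I. (-1::'b) ^ (card K - card I))"
    using sum.inter_filter[of "Pow K" "\<lambda>I. (-1::'b) ^ (card K - card I)" "\<lambda>I. S \<subseteq> I"] assms
    by (simp add: Collect_conj_eq)
  finally have X: "f K = (\<Sum>I | I \<in> Pow K \<and> S \<subseteq> I. (-1::'b) ^ (card K - card I))" .
  show ?thesis using X by (simp add: f_def eq_commute)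
qed

lemma sum_sigma_sI:
  "(\<lambda>y x. \<Sum>i\<in>I. sigma (b i) (snd (pr i)) (fst (pr i)) y x) = sI pr b I"
  unfolding sI_def sigma_def
  by (intro ext sum.cong refl) (auto simp: prod_eq_iff)

lemma cross_main:
  assumes ms: "module scale" and fX: "finite X" and fY: "finite Y"
    and pr: "\<forall>i<k. fst (pr i) \<in> X \<and> snd (pr i) \<in> Y"
  shows "cross_eff scale (PsiInv_map n scale JM X Y) {..<k} (\<lambda>i. sigma (b i) (snd (pr i)) (fst (pr i))) v B
         = (\<Sum>d\<in>{d \<in> E k {..<k} n. \<forall>i<k. 1 \<le> d i}. Hterm n scale JM k pr b v B d)"
proof -
  let ?K = "{..<k::nat}"
  let ?H = "Hterm n scale JM k pr b v B"
  let ?EK = "E k ?K n"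
  define supp where "supp d = {i\<in>?K. d i \<noteq> 0}" for d :: "nat \<Rightarrow> nat"
  have EI: "E k I n = {d \<in> ?EK. supp d \<subseteq> I}" if "I \<subseteq> ?K" for I
    using that by (auto simp: E_def supp_def)
  have fEK: "finite ?EK" by (rule finite_E) simp
  have "cross_eff scale (PsiInv_map n scale JM X Y) ?K (\<lambda>i. sigma (b i) (snd (pr i)) (fst (pr i))) v B
      = (\<Sum>I\<in>Pow ?K. scale ((-1) ^ (k - card I)) (\<Sum>d\<in>{d \<in> ?EK. supp d \<subseteq> I}. ?H d))"
    unfolding cross_eff_def sum_sigma_sI
  proof (rule sum.cong[OF refl])
    fix I assume "I \<in> Pow ?K"
    hence IK: "I \<subseteq> ?K" by simp
    have "PsiInv_map n scale JM X Y (sI pr b I) v B = (\<Sum>d\<in>{d \<in> ?EK. supp d \<subseteq> I}. ?H d)"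
      using psi_expand[OF ms fX fY IK pr, where n=n and JM=JM and b=b and v=v and B=B] unfolding EI[OF IK] .
    thus "scale ((- 1) ^ (card ?K - card I)) (PsiInv_map n scale JM X Y (sI pr b I) v B) =
          scale ((- 1) ^ (k - card I)) (\<Sum>d\<in>{d \<in> ?EK. supp d \<subseteq> I}. ?H d)" by simp
  qed
  also have "\<dots> = (\<Sum>I\<in>Pow ?K. \<Sum>d\<in>{d \<in> ?EK. supp d \<subseteq> I}. scale ((-1) ^ (k - card I)) (?H d))"
    by (simp add: module.scale_sum_right[OF ms])
  also have "\<dots> = (\<Sum>d\<in>?EK. \<Sum>I | I \<in> Pow ?K \<and> supp d \<subseteq> I. scale ((-1) ^ (k - card I)) (?H d))"
    by (rule sum.swap_restrict) (simp_all add: fEK)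
  also have "\<dots> = (\<Sum>d\<in>?EK. scale (\<Sum>I | I \<in> Pow ?K \<and> supp d \<subseteq> I. (-1) ^ (card ?K - card I)) (?H d))"
    by (simp add: module.scale_sum_left[OF ms])
  also have "\<dots> = (\<Sum>d\<in>?EK. if supp d = ?K then ?H d else 0)"
  proof (rule sum.cong[OF refl])
    fix d assume "d \<in> ?EK"
    have s: "supp d \<subseteq> ?K" by (auto simp: supp_def)
    show "scale (\<Sum>I | I \<in> Pow ?K \<and> supp d \<subseteq> I. (-1) ^ (card ?K - card I)) (?H d) =
          (if supp d = ?K then ?H d else 0)"
      by (subst sign_sum[OF _ s]) (auto simp: module.scale_one[OF ms] module.scale_zero_left[OF ms])
  qed
  also have "\<dots> = (\<Sum>d\<in>{d\<in>?EK. supp d = ?K}. ?H d)"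
    by (rule sum.inter_filter[symmetric]) (rule fEK)
  also have "{d\<in>?EK. supp d = ?K} = {d \<in> E k {..<k} n. \<forall>i<k. 1 \<le> d i}"
    by (auto simp: supp_def Suc_le_eq)
  finally show ?thesis .
qed


lemma part2:
  assumes ms: "module scale" and mz: "is_maze X Y P"
  shows "Phi_PsiInv_map n scale JM X Y P v = JA_map n scale JM P v"
proof
  fix B
  let ?k = "length P"
  define pr where "pr i = (fst (P ! i), fst (snd (P ! i)))" for i
  define b where "b i = snd (snd (P ! i))" for i
  have fX: "finite X" and fY: "finite Y" and prXY: "\<forall>i<?k. fst (pr i) \<in> X \<and> snd (pr i) \<in> Y"
    using mz by (auto simp: is_maze_def pr_def)
  have alpha: "(\<lambda>i. sigma (b i) (snd (pr i)) (fst (pr i))) =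
               (\<lambda>i. sigma (snd (snd (P ! i))) (fst (snd (P ! i))) (fst (P ! i)))"
    by (simp add: pr_def b_def)
  define dl where "dl l = (\<lambda>i. if i < ?k then l ! i else 0)" for l :: "nat list"
  have rs: "rsum ?k pr (dl l) = dmult P l" for l
    unfolding rsum_def dmult_def dl_def pr_def by (rule sum.cong) auto
  have "Phi_PsiInv_map n scale JM X Y P v B =
        (\<Sum>d\<in>{d \<in> E ?k {..<?k} n. \<forall>i<?k. 1 \<le> d i}. Hterm n scale JM ?k pr b v B d)"
    unfolding Phi_PsiInv_map_def using cross_main[OF ms fX fY prXY, of n JM b v B] alpha by simp
  also have "\<dots> = JA_map n scale JM P v B"
  proof (unfold JA_map_def, rule sym, rule sum.reindex_bij_witness[where j = dl and i = "\<lambda>d. map d [0..<?k]"])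
    fix l assume l: "l \<in> assignments ?k n"
    hence len: "length l = ?k" and ge: "\<forall>i<?k. 1 \<le> l ! i" and sl: "sum_list l = n"
      by (auto simp: assignments_def)
    show "map (dl l) [0..<?k] = l"
      using len by (intro nth_equalityI) (auto simp: dl_def)
    have "(\<Sum>i<?k. dl l i) = n"
      using sl len by (simp add: dl_def sum_list_sum_nth atLeast0LessThan)
    thus "dl l \<in> {d \<in> E ?k {..<?k} n. \<forall>i<?k. 1 \<le> d i}"
      using ge by (auto simp: E_def dl_def)
    have cf: "cf ?k pr (dl l) = dp_coeff P l"
    proof -
      have "(\<Prod>i<?k. fact (dl l i)) = (\<Prod>i<?k. fact (l ! i) :: nat)"
        by (rule prod.cong) (auto simp: dl_def)
      thus ?thesis unfolding cf_def dp_coeff_def rs by simp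
    qed
    have pb: "(\<Prod>i<?k. b i ^ dl l i) = (\<Prod>i<?k. snd (snd (P ! i)) ^ (l ! i))"
      by (rule prod.cong) (auto simp: dl_def b_def)
    show "Hterm n scale JM ?k pr b v B (dl l) =
          (if mtgt (dmult P l) = B
           then scale (of_nat (dp_coeff P l) * (\<Prod>i<?k. snd (snd (P ! i)) ^ l ! i))
                  (JM (dmult P l) (v (msrc (dmult P l)))) else 0)"
      unfolding Hterm_def rs cf pb ..
  next
    fix d assume d: "d \<in> {d \<in> E ?k {..<?k} n. \<forall>i<?k. 1 \<le> d i}"
    hence d0: "\<forall>i. \<not> i < ?k \<longrightarrow> d i = 0" and ge: "\<forall>i<?k. 1 \<le> d i" and sd: "(\<Sum>i<?k. d i) = n"
      by (auto simp: E_def)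
    show "dl (map d [0..<?k]) = d"
      using d0 by (auto simp: dl_def fun_eq_iff)
    have "sum_list (map d [0..<?k]) = n"
      using sd by (simp add: sum_list_sum_nth atLeast0LessThan)
    thus "map d [0..<?k] \<in> assignments ?k n"
      using ge by (auto simp: assignments_def)
  qed
  finally show "Phi_PsiInv_map n scale JM X Y P v B = JA_map n scale JM P v B" .
qed


lemma count_rsum_inj:
  assumes "inj_on f {..<k}" "i < k"
  shows "count (rsum k f d) (f i) = d i"
proof -
  have "count (rsum k f d) (f i) = (\<Sum>j<k. if j = i then d j else 0)"
    unfolding count_rsum by (rule sum.cong) (use assms in \<open>auto dest: inj_onD\<close>)
  thus ?thesis using assms by simp
qed

lemma part1_pointwise:
  assumes ms: "module scale" and lf: "linear_functor_MSet n scale JO JM"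
    and fX: "finite X" and v: "v \<in> PsiInv_obj n JO X"
  shows "cross_eff scale (PsiInv_map n scale JM X X) X (\<lambda>x. sigma 1 x x) v =
         (\<lambda>B. if set_mset B = X \<and> size B = n then v B else 0)"
proof
  fix B
  obtain xs where xs: "set xs = X" "distinct xs" using finite_distinct_list[OF fX] by blast
  let ?k = "length xs"
  define pr where "pr = (\<lambda>a. (a, a)) \<circ> (\<lambda>i. xs ! i)"
  define b :: "nat \<Rightarrow> 'a" where "b i = 1" for i
  have injn: "inj_on (\<lambda>i. xs ! i) {..<?k}" using xs(2) by (simp add: inj_on_nth)
  have injp: "inj_on pr {..<?k}" using injn by (auto simp: pr_def inj_on_def)
  have prX: "\<forall>i<?k. fst (pr i) \<in> X \<and> snd (pr i) \<in> X" using xs by (auto simp: pr_def)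
  define M where "M d = rsum ?k (\<lambda>i. xs ! i) d" for d
  have fstpr: "fst \<circ> pr = (\<lambda>i. xs ! i)" "snd \<circ> pr = (\<lambda>i. xs ! i)" by (auto simp: pr_def)
  have rsM: "rsum ?k pr d = mdiag (M d)" for d
    by (simp add: M_def mdiag_def image_rsum pr_def)
  let ?EF = "{d \<in> E ?k {..<?k} n. \<forall>i<?k. 1 \<le> d i}"
  have "cross_eff scale (PsiInv_map n scale JM X X) X (\<lambda>x. sigma 1 x x) v B =
        cross_eff scale (PsiInv_map n scale JM X X) {..<?k} (\<lambda>i. sigma (b i) (snd (pr i)) (fst (pr i))) v B"
  proof -
    have PowX: "Pow X = (\<lambda>J. (\<lambda>i. xs ! i) ` J) ` Pow {..<?k}"
    proof
      show "Pow X \<subseteq> (\<lambda>J. (\<lambda>i. xs ! i) ` J) ` Pow {..<?k}"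
      proof
        fix I assume "I \<in> Pow X"
        hence Is: "I \<subseteq> set xs" using xs(1) by auto
        have "x \<in> (\<lambda>i. xs ! i) ` {i\<in>{..<?k}. xs ! i \<in> I}" if x: "x \<in> I" for x
        proof -
          have "x \<in> set xs" using x Is by auto
          then obtain i where "i < ?k" "xs ! i = x" by (auto simp: in_set_conv_nth)
          thus ?thesis using x by auto
        qed
        hence "I = (\<lambda>i. xs ! i) ` {i\<in>{..<?k}. xs ! i \<in> I}" by auto
        thus "I \<in> (\<lambda>J. (\<lambda>i. xs ! i) ` J) ` Pow {..<?k}" by blast
      qed
    qed (use xs(1) in auto)
    have injP: "inj_on (\<lambda>J. (\<lambda>i. xs ! i) ` J) (Pow {..<?k})"
      using injn by (auto simp: inj_on_def inj_on_image_eq_iff[OF injn])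
    have cX: "card X = ?k" using xs distinct_card by blast
    show ?thesis
      unfolding cross_eff_def PowX sum.reindex[OF injP]
    proof (rule sum.cong[OF refl])
      fix J assume J: "J \<in> Pow {..<?k}"
      have injJ: "inj_on (\<lambda>i. xs ! i) J" using injn J by (auto intro: inj_on_subset)
      have "card ((\<lambda>i. xs ! i) ` J) = card J" using card_image[OF injJ] .
      moreover have "(\<lambda>y x. \<Sum>i\<in>(\<lambda>i. xs ! i) ` J. sigma 1 i i y x) =
                     (\<lambda>y x. \<Sum>i\<in>J. sigma (b i) (snd (pr i)) (fst (pr i)) y x)"
        by (simp add: sum.reindex[OF injJ] b_def pr_def)
      ultimately show "((\<lambda>I. scale ((- 1) ^ (card X - card I))
              (PsiInv_map n scale JM X X (\<lambda>y x. \<Sum>i\<in>I. sigma 1 i i y x) v B)) \<circ>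
             (\<lambda>J. (\<lambda>i. xs ! i) ` J)) J =
          scale ((- 1) ^ (card {..<?k} - card J))
           (PsiInv_map n scale JM X X (\<lambda>y x. \<Sum>i\<in>J. sigma (b i) (snd (pr i)) (fst (pr i)) y x) v B)"
        using cX by simp
    qed
  qed
  also have "\<dots> = (\<Sum>d\<in>?EF. Hterm n scale JM ?k pr b v B d)"
    by (rule cross_main[OF ms fX fX prX])
  also have "\<dots> = (\<Sum>d\<in>?EF. if M d = B then v B else 0)"
  proof (rule sum.cong[OF refl])
    fix d assume d: "d \<in> ?EF"
    hence ge: "\<forall>i<?k. 1 \<le> d i" and sd: "(\<Sum>i<?k. d i) = n" by (auto simp: E_def)
    have cf1: "cf ?k pr d = 1"
    proof -
      have "set_mset (rsum ?k pr d) = pr ` {..<?k}"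
        using ge by (auto simp: set_rsum Suc_le_eq)
      hence "(\<Prod>q\<in>set_mset (rsum ?k pr d). fact (count (rsum ?k pr d) q)) = (\<Prod>i<?k. fact (d i) :: nat)"
        by (simp add: prod.reindex[OF injp] count_rsum_inj[OF injp])
      thus ?thesis unfolding cf_def by simp
    qed
    have pb: "(\<Prod>i<?k. b i ^ d i) = 1" by (simp add: b_def)
    have Mms: "M d \<in> msets_in X n"
      unfolding M_def by (rule rsum_in_msets) (use xs sd in auto)
    have src: "msrc (rsum ?k pr d) = M d" and tgt: "mtgt (rsum ?k pr d) = M d"
      by (simp_all add: msrc_rsum mtgt_rsum fstpr M_def)
    have vJO: "v (M d) \<in> JO (M d)" using v Mms by (auto simp: PsiInv_obj_def dsum_def)
    have "JM (mdiag (M d)) (v (M d)) = v (M d)"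
    proof -
      have idf: "\<forall>A. size A = n \<longrightarrow> (\<forall>v\<in>JO A. JM (mdiag A) v = v)"
        using lf unfolding linear_functor_MSet_def by (elim conjE) assumption
      have "size (M d) = n" using Mms by (simp add: msets_in_def)
      thus ?thesis using idf vJO by blast
    qed
    thus "Hterm n scale JM ?k pr b v B d = (if M d = B then v B else 0)"
      unfolding Hterm_def cf1 pb src tgt rsM[symmetric]
      by (auto simp: rsM module.scale_one[OF ms])
  qed
  also have "\<dots> = (if set_mset B = X \<and> size B = n then v B else 0)"
  proof (cases "set_mset B = X \<and> size B = n")
    case True
    define d0 where "d0 i = (if i < ?k then count B (xs ! i) else 0)" for i
    have ge0: "\<forall>i<?k. 1 \<le> d0 i"
    proof (intro allI impI)
      fix i assume i: "i < ?k"
      have "xs ! i \<in> X" using xs(1) i by auto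
      hence "xs ! i \<in># B" using True by simp
      thus "1 \<le> d0 i" using i by (simp add: d0_def Suc_le_eq)
    qed
    have sd0: "(\<Sum>i<?k. d0 i) = n"
    proof -
      have "(\<Sum>i<?k. d0 i) = (\<Sum>i<?k. count B (xs ! i))" by (simp add: d0_def)
      also have "\<dots> = (\<Sum>x\<in>set xs. count B x)"
      proof -
        have "set xs = (\<lambda>i. xs ! i) ` {..<?k}" by (auto simp: set_conv_nth)
        thus ?thesis using sum.reindex[OF injn, of "count B"] by simp
      qed
      also have "\<dots> = size B" using True xs by (simp add: size_multiset_overloaded_eq)
      finally show ?thesis using True by simp
    qed
    have "\<forall>i. i \<notin> {..<?k} \<longrightarrow> d0 i = 0" by (simp add: d0_def)
    hence d0E: "d0 \<in> ?EF" using ge0 sd0 unfolding E_def by blast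
    have Md0: "M d0 = B"
    proof (rule multiset_eqI)
      fix x
      show "count (M d0) x = count B x"
      proof (cases "x \<in> X")
        case True
        then obtain j where j: "j < ?k" "x = xs ! j" using xs(1) by (auto simp: in_set_conv_nth)
        show ?thesis unfolding M_def j(2) count_rsum_inj[OF injn j(1)] using j by (simp add: d0_def)
      next
        case False
        hence "x \<notin># B" using True by auto
        hence "count B x = 0" by (simp add: not_in_iff)
        moreover have "count (M d0) x = 0"
          unfolding M_def count_rsum using False xs(1) by (intro sum.neutral) auto
        ultimately show ?thesis by simp
      qed
    qed
    have uniq: "d = d0" if "d \<in> ?EF" "M d = B" for d
    proof
      fix i show "d i = d0 i"
      proof (cases "i < ?k")
        case True
        have "count (M d) (xs ! i) = d i" unfolding M_def by (rule count_rsum_inj[OF injn True])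
        thus ?thesis using that True by (simp add: d0_def)
      qed (use that in \<open>auto simp: E_def d0_def\<close>)
    qed
    have fEF: "finite ?EF"
      by (rule finite_subset[OF _ finite_E[of "{..<?k}" ?k n]]) auto
    have "(\<Sum>d\<in>?EF. if M d = B then v B else 0) = (\<Sum>d\<in>?EF. if d = d0 then v B else 0)"
    proof (rule sum.cong[OF refl])
      fix d assume d: "d \<in> ?EF"
      show "(if M d = B then v B else 0) = (if d = d0 then v B else 0)"
      proof (cases "M d = B")
        case True thus ?thesis using uniq[OF d] by simp
      next
        case False thus ?thesis using Md0 by auto
      qed
    qed
    also have "\<dots> = v B" using sum.delta[OF fEF, of d0 "\<lambda>_. v B"] d0E by simp
    finally have "(\<Sum>d\<in>?EF. if M d = B then v B else 0) = v B" .
    thus ?thesis using True by simp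
  next
    case False
    have "M d \<noteq> B" if "d \<in> ?EF" for d
    proof -
      have ge: "\<forall>i<?k. 1 \<le> d i" and sd: "(\<Sum>i<?k. d i) = n" using that by (auto simp: E_def)
      have "set_mset (M d) = X"
        unfolding M_def set_rsum using ge xs(1) by (auto simp: Suc_le_eq in_set_conv_nth)
      moreover have "size (M d) = n" unfolding M_def size_rsum using sd .
      ultimately show ?thesis using False by auto
    qed
    thus ?thesis using False by (intro trans[OF sum.neutral]) auto
  qed
  finally show "cross_eff scale (PsiInv_map n scale JM X X) X (\<lambda>x. sigma 1 x x) v B =
                (if set_mset B = X \<and> size B = n then v B else 0)" .
qed


theorem mainTheorem5:
  fixes n :: nat
    and scale :: "'b::comm_ring_1 \<Rightarrow> 'm::ab_group_add \<Rightarrow> 'm"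
    and JO :: "'x multiset \<Rightarrow> 'm set"
    and JM :: "('x \<times> 'x) multiset \<Rightarrow> 'm \<Rightarrow> 'm"
  assumes "binomial_ring TYPE('b)"
    and "module scale"
    and "linear_functor_MSet n scale JO JM"
  shows "(\<forall>X::'x set. finite X \<longrightarrow> Phi_PsiInv_obj n scale JO JM X = JA_obj n JO X)
       \<and> (\<forall>(X::'x set) (Y::'x set) (P::('x \<times> 'x \<times> 'b) list). is_maze X Y P \<longrightarrow>
            (\<forall>v\<in>JA_obj n JO X. Phi_PsiInv_map n scale JM X Y P v = JA_map n scale JM P v))"
proof -
  note ms = assms(2) and lf = assms(3)
  have sub: "\<forall>A. size A = n \<longrightarrow> module.subspace scale (JO A)"
    using lf unfolding linear_functor_MSet_def by (elim conjE) assumption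
  have zero: "0 \<in> JO A" if "size A = n" for A
    using sub that module.subspace_0[OF ms] by blast
  show ?thesis
  proof (intro conjI allI impI ballI)
    fix X :: "'x set" assume fX: "finite X"
    define R where "R v = (\<lambda>B. if set_mset B = X \<and> size B = n then v B else (0::'m))" for v :: "'x multiset \<Rightarrow> 'm"
    have "Phi_PsiInv_obj n scale JO JM X = R ` PsiInv_obj n JO X"
      unfolding Phi_PsiInv_obj_def R_def
      by (rule image_cong[OF refl]) (rule part1_pointwise[OF ms lf fX])
    also have "\<dots> = JA_obj n JO X"
    proof
      show "R ` PsiInv_obj n JO X \<subseteq> JA_obj n JO X"
      proof
        fix w assume "w \<in> R ` PsiInv_obj n JO X"
        then obtain v where v: "v \<in> PsiInv_obj n JO X" and w: "w = R v" by blast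
        have "w A \<in> JO A" if "set_mset A = X \<and> size A = n" for A
        proof -
          have "A \<in> msets_in X n" using that by (simp add: msets_in_def)
          thus ?thesis using v that w by (simp add: PsiInv_obj_def dsum_def R_def)
        qed
        moreover have "w A = 0" if "A \<notin> {A. set_mset A = X \<and> size A = n}" for A
          using that w by (auto simp: R_def)
        ultimately show "w \<in> JA_obj n JO X" by (simp add: JA_obj_def dsum_def)
      qed
    next
      show "JA_obj n JO X \<subseteq> R ` PsiInv_obj n JO X"
      proof
        fix w assume w: "w \<in> JA_obj n JO X"
        have "w A \<in> JO A" if "A \<in> msets_in X n" for A
        proof (cases "set_mset A = X")
          case True thus ?thesis using w that by (simp add: JA_obj_def dsum_def msets_in_def)
        next
          case False
          hence "w A = 0" using w by (simp add: JA_obj_def dsum_def)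
          thus ?thesis using zero that by (simp add: msets_in_def)
        qed
        moreover have "w A = 0" if "A \<notin> msets_in X n" for A
          using that w by (simp add: JA_obj_def dsum_def msets_in_def)
        ultimately have wP: "w \<in> PsiInv_obj n JO X" by (simp add: PsiInv_obj_def dsum_def)
        have "R w = w"
        proof
          fix A show "R w A = w A"
            using w by (simp add: R_def JA_obj_def dsum_def)
        qed
        thus "w \<in> R ` PsiInv_obj n JO X" using wP by (metis image_eqI)
      qed
    qed
    finally show "Phi_PsiInv_obj n scale JO JM X = JA_obj n JO X" .
  next
    fix X Y :: "'x set" and P :: "('x \<times> 'x \<times> 'b) list" and v
    assume "is_maze X Y P"
    thus "Phi_PsiInv_map n scale JM X Y P v = JA_map n scale JM P v"
      by (rule part2[OF ms])
  qed
qed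

end
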